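(* Let $\kappa$ be a regular infinite cardinal and let $\langle W^\kappa,(T_i)_{i\in\{a,b\}},\theta\rangle$ be the $*$-type space described in the context. Then: (i) $\{h\}^{W^\kappa}=[X_0^\kappa=h]$, $\{t\}^{W^\kappa}=[X_0^\kappa=t]$, and $\mathrm{dp}(\{h\})=\mathrm{dp}(\{t\})=0$; (ii) for every $i\in\{a,b\}$ and $0\le\beta<\kappa$ there are $\kappa$-expressions $\varphi_i^0(\beta),\varphi_i^1(\beta)$ of depth $\beta+1$ with $(\varphi_i^1(\beta))^{W^\kappa}=[X_i^\kappa(\beta)=1]$ and $(\varphi_i^0(\beta))^{W^\kappa}=[X_i^\kappa(\beta)=0]$; (iii) for every $i\in\{a,b\}$ and limit ordinal $\lambda<\kappa$ there are $\kappa$-expressions $\varphi_i^{\rm even}(\lambda),\varphi_i^{\rm odd}(\lambda)$ of depth $\lambda$ with $(\varphi_i^{\rm even}(\lambda))^{W^\kappa}=[\lambda\text{-par}(X_i^\kappa)=\text{even}]$ and $(\varphi_i^{\rm odd}(\lambda))^{W^\kappa}=[\lambda\text{-par}(X_i^\kappa)=\text{odd}]$.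
   Context: Records: for $\alpha\ge1$, a record of length $\alpha$ is $r\in\{0,1\}^\alpha$ such that for every limit $\lambda\le\alpha$ there is $\gamma<\lambda$ with $r(\beta)=0$ for $\gamma\le\beta<\lambda$. Parity: finite ordinals usual (0 even); infinite $\hat\lambda+n$ ($\hat\lambda$ limit) has the parity of $n$. For limit $\lambda\le\alpha$, $o^\lambda(r)$ is the least ordinal $<\lambda$ after which $r$ is $0$ below $\lambda$; $\lambda\text{-par}(r)$ is its parity. $W^0=\{h,t\}$; $W^\alpha$ ($\alpha\ge1$) = triples $(w_0,w_a^\alpha,w_b^\alpha)$, $w_0\in\{h,t\}$, $w_a^\alpha,w_b^\alpha$ records of length $\alpha$; $w^\alpha\upharpoonright\beta$ restricts both records (and $w^\alpha\upharpoonright0=w_0$); $\pi_{\beta,\alpha}(w^\alpha)=w^\alpha\upharpoonright\beta$. For $i\in\{a,b\}$, $j$ the other player, $P_i(w^\alpha)$: set of $v^\alpha$ with $v_i^\alpha=w_i^\alpha$; $w_i^\alpha(0)=1\Rightarrow v_0=w_0$; $w_i^\alpha(\beta+1)=1\Rightarrow v_j^\alpha(\beta)=w_j^\alpha(\beta)$ ($\beta+1<\alpha$); $w_i^\alpha(\lambda)=1\Rightarrow\lambda\text{-par}(v_j^\alpha)=\lambda\text{-par}(w_j^\alpha)$ (limit $\lambda<\alpha$). $T_a,T_b$ map $W^\kappa$ into finitely additive probability measures on $\mathrm{Pow}(W^\kappa)$ and satisfy for all $w^\kappa$: (a) $T_i$ constant on $P_i(w^\kappa)$; (b) $T_i(w^\kappa)(P_i(w^\kappa))=1$;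 (c) $T_i(w^\kappa)([X_0^\kappa=w_0])=1$ if $w_i^\kappa(0)=1$, $\frac12$ otherwise; (d) for $\beta<\kappa$, $T_i(w^\kappa)([X_j^\kappa(\beta)=w_j^\kappa(\beta)])=1$ if $w_i^\kappa(\beta+1)=1$, $\frac12$ otherwise; (e) for limit $\lambda<\kappa$, $T_i(w^\kappa)([\lambda\text{-par}(X_j^\kappa)=\lambda\text{-par}(w_j^\kappa)])=1$ if $w_i^\kappa(\lambda)=1$, $\frac12$ otherwise; (f) for $\beta<\alpha<\kappa$, $E^\beta\subseteq W^\beta$, $u^\kappa\upharpoonright\alpha=w^\kappa\upharpoonright\alpha$ implies equal $T_i$-values on $\pi_{\beta,\kappa}^{-1}(E^\beta)$. $\theta(w^\kappa)=w_0$. Notation: $[X_0^\kappa=c]=\{u:u_0=c\}$, $[X_i^\kappa(\beta)=c]=\{u:u_i^\kappa(\beta)=c\}$, $[\lambda\text{-par}(X_i^\kappa)=e]=\{u:\lambda\text{-par}(u_i^\kappa)=e\}$. $\kappa$-expressions over $\Sigma_S=\mathrm{Pow}(\{h,t\})$, $I=\{a,b\}$: least set containing each $E\subseteq\{h,t\}$ and closed under $\neg$, $B_i^p$ ($p\in[0,1]$), and conjunctions of fewer than $\kappa$ (nonempty) expressions. Semantics: $E^{W^\kappa}=\theta^{-1}(E)$, complement, $(B_i^p\varphi)^{W^\kappa}=\{w:T_i(w)(\varphi^{W^\kappa})\ge p\}$, intersection. Depth: $\mathrm{dp}(E)=0$, $\mathrm{dp}(\neg\varphi)=\mathrm{dp}(\varphi)$,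 $\mathrm{dp}(B_i^p\varphi)=\mathrm{dp}(\varphi)+1$, $\mathrm{dp}(\bigwedge\Psi)=\sup_{\varphi\in\Psi}\mathrm{dp}(\varphi)$. *)

theory Defs
  imports Complex_Main "HOL-Library.Equipollence"
begin

text \<open>kappa is represented by a type 'k with a well-order whose order type is kappa:
  the elements of 'k are the ordinals below kappa.\<close>

definition regular_infinite_cardinal :: "'k::wellorder itself \<Rightarrow> bool" where
  "regular_infinite_cardinal _ \<longleftrightarrow>
     infinite (UNIV :: 'k set)
   \<and> (\<forall>x::'k. {y. y < x} \<prec> (UNIV :: 'k set))
   \<and> (\<forall>S::'k set. S \<prec> (UNIV :: 'k set) \<longrightarrow> (\<exists>x. \<forall>y\<in>S. y < x))"

definition ord0 :: "'k::wellorder" where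
  "ord0 = (LEAST x. True)"

definition osucc :: "'k::wellorder \<Rightarrow> 'k" where
  "osucc x = (LEAST y. x < y)"

definition is_successor :: "'k::wellorder \<Rightarrow> bool" where
  "is_successor y \<longleftrightarrow> (\<exists>x. x < y \<and> \<not> (\<exists>z. x < z \<and> z < y))"

definition is_limit :: "'k::wellorder \<Rightarrow> bool" where
  "is_limit l \<longleftrightarrow> (\<exists>g. g < l) \<and> \<not> is_successor l"

definition ord_even :: "'k::wellorder \<Rightarrow> bool" where
  "ord_even x \<longleftrightarrow> (\<exists>l n. \<not> is_successor l \<and> x = (osucc ^^ n) l \<and> even n)"

definition is_record :: "('k::wellorder \<Rightarrow> bool) \<Rightarrow> bool" where
  "is_record r \<longleftrightarrow>
     (\<forall>l. is_limit l \<longrightarrow> (\<exists>g<l. \<forall>b. g \<le> b \<and> b < l \<longrightarrow> \<not> r b))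
   \<and> (\<exists>g. \<forall>b. g \<le> b \<longrightarrow> \<not> r b)"  \<comment> \<open>the case lambda = kappa\<close>

definition o_lim :: "'k::wellorder \<Rightarrow> ('k \<Rightarrow> bool) \<Rightarrow> 'k" where
  "o_lim l r = (LEAST g. g < l \<and> (\<forall>b. g \<le> b \<and> b < l \<longrightarrow> \<not> r b))"

definition lpar_even :: "'k::wellorder \<Rightarrow> ('k \<Rightarrow> bool) \<Rightarrow> bool" where
  "lpar_even l r = ord_even (o_lim l r)"

datatype coin = Hd | Tl
datatype agent = Ag_a | Ag_b

fun other :: "agent \<Rightarrow> agent" where
  "other Ag_a = Ag_b" | "other Ag_b = Ag_a"

type_synonym 'k world = "coin \<times> ('k \<Rightarrow> bool) \<times> ('k \<Rightarrow> bool)"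

definition W :: "'k::wellorder world set" where
  "W = {w. is_record (fst (snd w)) \<and> is_record (snd (snd w))}"

fun X :: "agent \<Rightarrow> 'k world \<Rightarrow> 'k \<Rightarrow> bool" where
  "X Ag_a w = fst (snd w)" | "X Ag_b w = snd (snd w)"

text \<open>Restriction w|beta, representing W^beta inside the same type by padding with zeros;
  for beta = 0 this is just the coin w_0.\<close>
definition restr :: "'k::wellorder \<Rightarrow> 'k world \<Rightarrow> 'k world" where
  "restr b w = (fst w, \<lambda>g. g < b \<and> fst (snd w) g, \<lambda>g. g < b \<and> snd (snd w) g)"

definition P :: "agent \<Rightarrow> 'k::wellorder world \<Rightarrow> 'k world set" where
  "P i w = {v \<in> W. X i v = X i w
      \<and> (X i w ord0 \<longrightarrow> fst v = fst w)
      \<and> (\<forall>b. X i w (osucc b) \<longrightarrow> X (other i) v b = X (other i) w b)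
      \<and> (\<forall>l. is_limit l \<and> X i w l \<longrightarrow> lpar_even l (X (other i) v) = lpar_even l (X (other i) w))}"

definition fa_prob :: "'a set \<Rightarrow> ('a set \<Rightarrow> real) \<Rightarrow> bool" where
  "fa_prob \<Omega> \<mu> \<longleftrightarrow> \<mu> \<Omega> = 1 \<and> (\<forall>A\<subseteq>\<Omega>. 0 \<le> \<mu> A)
     \<and> (\<forall>A B. A \<subseteq> \<Omega> \<and> B \<subseteq> \<Omega> \<and> A \<inter> B = {} \<longrightarrow> \<mu> (A \<union> B) = \<mu> A + \<mu> B)"

definition half_or_one :: "bool \<Rightarrow> real" where
  "half_or_one c = (if c then 1 else 1/2)"

definition star_type_space :: "(agent \<Rightarrow> 'k::wellorder world \<Rightarrow> 'k world set \<Rightarrow> real) \<Rightarrow> bool" where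
  "star_type_space T \<longleftrightarrow> (\<forall>i. \<forall>w\<in>W.
      fa_prob W (T i w)
    \<and> (\<forall>v\<in>P i w. T i v = T i w)
    \<and> T i w (P i w) = 1
    \<and> T i w {u\<in>W. fst u = fst w} = half_or_one (X i w ord0)
    \<and> (\<forall>b. T i w {u\<in>W. X (other i) u b = X (other i) w b} = half_or_one (X i w (osucc b)))
    \<and> (\<forall>l. is_limit l \<longrightarrow>
          T i w {u\<in>W. lpar_even l (X (other i) u) = lpar_even l (X (other i) w)} = half_or_one (X i w l))
    \<and> (\<forall>b a E u. b < a \<and> E \<subseteq> restr b ` W \<and> u \<in> W \<and> restr a u = restr a w \<longrightarrow>
          T i u {v\<in>W. restr b v \<in> E} = T i w {v\<in>W. restr b v \<in> E}))"

text \<open>A conjunction of fewer than kappa expressions is given by a nonempty index set S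
  of size < kappa and a family f indexed by S.\<close>
datatype 'k kexp = Prim "coin set" | Neg "'k kexp" | Bel agent real "'k kexp"
  | Conj "'k set" "'k \<Rightarrow> 'k kexp"

inductive kexp_wf :: "'k::wellorder kexp \<Rightarrow> bool" where
  "kexp_wf (Prim E)"
| "kexp_wf \<phi> \<Longrightarrow> kexp_wf (Neg \<phi>)"
| "kexp_wf \<phi> \<Longrightarrow> 0 \<le> p \<Longrightarrow> p \<le> 1 \<Longrightarrow> kexp_wf (Bel i p \<phi>)"
| "S \<noteq> {} \<Longrightarrow> S \<prec> (UNIV :: 'k set) \<Longrightarrow> (\<forall>g\<in>S. kexp_wf (f g)) \<Longrightarrow> kexp_wf (Conj S f)"

primrec sem :: "(agent \<Rightarrow> 'k::wellorder world \<Rightarrow> 'k world set \<Rightarrow> real) \<Rightarrow> 'k kexp \<Rightarrow> 'k world set" where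
  "sem T (Prim E) = {w\<in>W. fst w \<in> E}"
| "sem T (Neg \<phi>) = W - sem T \<phi>"
| "sem T (Bel i p \<phi>) = {w\<in>W. p \<le> T i w (sem T \<phi>)}"
| "sem T (Conj S f) = W \<inter> (\<Inter>g\<in>S. sem T (f g))"

primrec dp :: "'k::wellorder kexp \<Rightarrow> 'k" where
  "dp (Prim E) = ord0"
| "dp (Neg \<phi>) = dp \<phi>"
| "dp (Bel i p \<phi>) = osucc (dp \<phi>)"
| "dp (Conj S f) = (LEAST x. \<forall>g\<in>S. dp (f g) \<le> x)"

end

theory Submission
  imports Defs
begin

lemma nomax:
  assumes "regular_infinite_cardinal TYPE('k::wellorder)"
  shows "\<exists>y. (x::'k) < y"
proof -
  have inf: "infinite (UNIV::'k set)" using assms unfolding regular_infinite_cardinal_def by blast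
  have "{x} \<prec> (UNIV::'k set)" by (rule finite_lesspoll_infinite[OF inf]) simp
  then show ?thesis using assms unfolding regular_infinite_cardinal_def by blast
qed

lemma small_below:
  assumes "regular_infinite_cardinal TYPE('k::wellorder)" "S \<subseteq> {y. y < (x::'k)}"
  shows "S \<prec> (UNIV::'k set)"
proof -
  have "{y. y < x} \<prec> (UNIV::'k set)" using assms(1) unfolding regular_infinite_cardinal_def by blast
  then show ?thesis using assms(2) subset_imp_lepoll lesspoll_trans1 by blast
qed

lemma osucc_gt:
  assumes "regular_infinite_cardinal TYPE('k::wellorder)"
  shows "(x::'k) < osucc x"
  unfolding osucc_def using nomax[OF assms] by (metis LeastI)

lemma osucc_le: "(x::'k::wellorder) < y \<Longrightarrow> osucc x \<le> y"
  unfolding osucc_def by (rule Least_le)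

lemma ord0_le: "ord0 \<le> (x::'k::wellorder)"
  unfolding ord0_def by (rule Least_le) simp

lemma ord0_even: "ord_even (ord0::'k::wellorder)"
proof -
  have "\<not> is_successor (ord0::'k)" unfolding is_successor_def using ord0_le not_le by blast
  then show ?thesis unfolding ord_even_def by (metis funpow_0 even_zero)
qed

lemma osucc_ord0_odd:
  assumes "regular_infinite_cardinal TYPE('k::wellorder)"
  shows "\<not> ord_even (osucc (ord0::'k))"
proof
  assume "ord_even (osucc (ord0::'k))"
  then obtain l n where l: "\<not> is_successor l" "osucc (ord0::'k) = (osucc ^^ n) l" "even n"
    unfolding ord_even_def by blast
  show False
  proof (cases n)
    case 0
    then have "is_successor l" using l unfolding is_successor_def
      using osucc_gt[OF assms, of ord0] osucc_le not_le by (metis funpow_0)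
    then show False using l by blast
  next
    case (Suc m)
    with l(3) obtain k where k: "n = Suc (Suc k)" by (cases m) auto
    define m where "m = (osucc ^^ k) l"
    have "osucc (ord0::'k) = osucc (osucc m)" using l(2) k m_def by simp
    then have "osucc m < osucc ord0" using osucc_gt[OF assms, of "osucc m"] by simp
    then have "osucc m \<le> ord0" using osucc_le not_le osucc_gt[OF assms] by (metis leD le_less_trans)
    then show False using osucc_gt[OF assms, of m] ord0_le[of m] by simp
  qed
qed

lemma limit_osucc_less:
  assumes "regular_infinite_cardinal TYPE('k::wellorder)" "is_limit l" "(b::'k) < l"
  shows "osucc b < l"
proof -
  have "osucc b \<le> l" using osucc_le assms(3) .
  moreover have "osucc b \<noteq> l"
  proof
    assume "osucc b = l"
    then have "is_successor l" unfolding is_successor_def using assms(3) osucc_le not_le by metis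
    then show False using assms(2) unfolding is_limit_def by blast
  qed
  ultimately show ?thesis by simp
qed

lemma lub_limit:
  assumes "regular_infinite_cardinal TYPE('k::wellorder)" "is_limit l" "(d::'k) < l"
  shows "(LEAST x. \<forall>b. d \<le> b \<and> b < l \<longrightarrow> osucc b \<le> x) = l"
proof (rule Least_equality)
  show "\<forall>b. d \<le> b \<and> b < l \<longrightarrow> osucc b \<le> l" using osucc_le by blast
next
  fix y assume y: "\<forall>b. d \<le> b \<and> b < l \<longrightarrow> osucc b \<le> y"
  show "l \<le> y"
  proof (rule ccontr)
    assume "\<not> l \<le> y"
    then have yl: "y < l" by simp
    define b where "b = max d y"
    have "d \<le> b" "b < l" using yl assms(3) by (auto simp: b_def)
    then have "osucc b \<le> y" using y by blast
    moreover have "y \<le> b" by (simp add: b_def)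
    ultimately show False using osucc_gt[OF assms(1), of b] by simp
  qed
qed


lemma olim_succ:
  assumes "regular_infinite_cardinal TYPE('k::wellorder)" "is_limit l" "(d::'k) < l" "r d"
    "\<forall>b. d < b \<and> b < l \<longrightarrow> \<not> r b"
  shows "o_lim l r = osucc d"
  unfolding o_lim_def
proof (rule Least_equality)
  show "osucc d < l \<and> (\<forall>b. osucc d \<le> b \<and> b < l \<longrightarrow> \<not> r b)"
    using limit_osucc_less[OF assms(1-3)] assms(5) osucc_gt[OF assms(1), of d] by auto
next
  fix y assume y: "y < l \<and> (\<forall>b. y \<le> b \<and> b < l \<longrightarrow> \<not> r b)"
  show "osucc d \<le> y"
  proof (rule ccontr)
    assume "\<not> osucc d \<le> y"
    then have "y \<le> d" using osucc_le[of d y] by (meson not_le)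
    then show False using y assms(3,4) by blast
  qed
qed

lemma olim_char:
  assumes "regular_infinite_cardinal TYPE('k::wellorder)" "is_record r" "is_limit (l::'k)"
    "\<not> ord_even (o_lim l r)"
  shows "\<exists>d<l. r d \<and> (\<forall>b. d < b \<and> b < l \<longrightarrow> \<not> r b) \<and> \<not> ord_even (osucc d)"
proof -
  define g where "g = o_lim l r"
  have ex: "\<exists>g<l. \<forall>b. g \<le> b \<and> b < l \<longrightarrow> \<not> r b" using assms(2,3) unfolding is_record_def by blast
  have "g < l \<and> (\<forall>b. g \<le> b \<and> b < l \<longrightarrow> \<not> r b)"
    unfolding g_def o_lim_def by (rule LeastI_ex[OF ex])
  then have g: "g < l" "\<forall>b. g \<le> b \<and> b < l \<longrightarrow> \<not> r b" by auto
  have gmin: "\<And>y. y < l \<Longrightarrow> (\<forall>b. y \<le> b \<and> b < l \<longrightarrow> \<not> r b) \<Longrightarrow> g \<le> y"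
    unfolding g_def o_lim_def by (rule Least_le) blast
  have "g \<noteq> ord0" using assms(4) ord0_even unfolding g_def by metis
  then have g0: "ord0 < g" using ord0_le[of g] by simp
  have "is_successor g"
  proof (rule ccontr)
    assume "\<not> is_successor g"
    then have "is_limit g" using g0 unfolding is_limit_def by blast
    then obtain g' where g': "g' < g" "\<forall>b. g' \<le> b \<and> b < g \<longrightarrow> \<not> r b"
      using assms(2) unfolding is_record_def by blast
    have "\<forall>b. g' \<le> b \<and> b < l \<longrightarrow> \<not> r b"
    proof (intro allI impI)
      fix b assume b: "g' \<le> b \<and> b < l"
      show "\<not> r b"
      proof (cases "b < g")
        case True then show ?thesis using g'(2) b by blast
      next
        case False then show ?thesis using g(2) b by simp
      qed
    qed
    then have "g \<le> g'" using gmin g'(1) g(1) by simp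
    then show False using g'(1) by simp
  qed
  then obtain d where d: "d < g" "\<not> (\<exists>z. d < z \<and> z < g)" unfolding is_successor_def by blast
  have rd: "r d"
  proof (rule ccontr)
    assume "\<not> r d"
    have "\<forall>b. d \<le> b \<and> b < l \<longrightarrow> \<not> r b"
    proof (intro allI impI)
      fix b assume b: "d \<le> b \<and> b < l"
      show "\<not> r b"
      proof (cases "b = d")
        case True then show ?thesis using \<open>\<not> r d\<close> by simp
      next
        case False then have "g \<le> b" using d(2) b by (meson le_less not_le)
        then show ?thesis using g(2) b by simp
      qed
    qed
    then have "g \<le> d" using gmin d(1) g(1) by simp
    then show False using d(1) by simp
  qed
  have zero: "\<forall>b. d < b \<and> b < l \<longrightarrow> \<not> r b" using g(2) d(2) by (meson not_le)
  have dl: "d < l" using d(1) g(1) by simp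
  have "o_lim l r = osucc d" using olim_succ[OF assms(1,3) dl rd zero] .
  then show ?thesis using dl rd zero assms(4) by auto
qed

lemma odd_iff:
  assumes "regular_infinite_cardinal TYPE('k::wellorder)" "is_record r" "is_limit (l::'k)"
  shows "(\<not> lpar_even l r) \<longleftrightarrow>
    (\<exists>d<l. \<not> ord_even (osucc d) \<and> r d \<and> (\<forall>b. d < b \<and> b < l \<longrightarrow> \<not> r b))"
proof
  assume "\<not> lpar_even l r"
  then show "\<exists>d<l. \<not> ord_even (osucc d) \<and> r d \<and> (\<forall>b. d < b \<and> b < l \<longrightarrow> \<not> r b)"
    using olim_char[OF assms] unfolding lpar_even_def by blast
next
  assume "\<exists>d<l. \<not> ord_even (osucc d) \<and> r d \<and> (\<forall>b. d < b \<and> b < l \<longrightarrow> \<not> r b)"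
  then obtain d where d: "d < l" "\<not> ord_even (osucc d)" "r d" "\<forall>b. d < b \<and> b < l \<longrightarrow> \<not> r b"
    by blast
  show "\<not> lpar_even l r" unfolding lpar_even_def using olim_succ[OF assms(1,3) d(1,3,4)] d(2) by simp
qed


lemma sem_sub: "sem T \<phi> \<subseteq> W"
  by (induction \<phi>) auto

definition disj2 :: "'k::wellorder kexp \<Rightarrow> 'k kexp \<Rightarrow> 'k kexp" where
  "disj2 \<phi> \<psi> = Neg (Conj {ord0, osucc ord0} (\<lambda>g. if g = ord0 then Neg \<phi> else Neg \<psi>))"

definition bform :: "agent \<Rightarrow> 'k::wellorder kexp \<Rightarrow> 'k kexp" where
  "bform i \<phi> = disj2 (Bel i 1 \<phi>) (Bel i 1 (Neg \<phi>))"

lemma ord0_ne: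
  assumes "regular_infinite_cardinal TYPE('k::wellorder)"
  shows "osucc (ord0::'k) \<noteq> ord0"
  using osucc_gt[OF assms, of ord0] by simp

lemma dp_disj2:
  assumes "regular_infinite_cardinal TYPE('k::wellorder)"
  shows "dp (disj2 \<phi> \<psi> :: 'k kexp) = max (dp \<phi>) (dp \<psi>)"
proof -
  have "dp (disj2 \<phi> \<psi> :: 'k kexp) = (LEAST x. dp \<phi> \<le> x \<and> dp \<psi> \<le> x)"
    unfolding disj2_def using ord0_ne[OF assms] by simp
  also have "\<dots> = max (dp \<phi>) (dp \<psi>)"
    by (rule Least_equality) auto
  finally show ?thesis .
qed

lemma sem_disj2:
  assumes "regular_infinite_cardinal TYPE('k::wellorder)"
  shows "sem T (disj2 \<phi> \<psi> :: 'k kexp) = sem T \<phi> \<union> sem T \<psi>"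
  unfolding disj2_def using sem_sub[of T \<phi>] sem_sub[of T \<psi>] ord0_ne[OF assms] by auto

lemma wf_disj2:
  assumes "regular_infinite_cardinal TYPE('k::wellorder)" "kexp_wf \<phi>" "kexp_wf \<psi>"
  shows "kexp_wf (disj2 \<phi> \<psi> :: 'k kexp)"
  unfolding disj2_def
proof (intro kexp_wf.intros)
  have inf: "infinite (UNIV::'k set)" using assms(1) unfolding regular_infinite_cardinal_def by blast
  show "{ord0, osucc ord0} \<prec> (UNIV::'k set)" by (rule finite_lesspoll_infinite[OF inf]) simp
  show "{ord0::'k, osucc ord0} \<noteq> {}" by simp
  show "\<forall>g\<in>{ord0::'k, osucc ord0}. kexp_wf (if g = ord0 then Neg \<phi> else Neg \<psi>)"
    using assms(2,3) by (auto intro: kexp_wf.intros)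
qed

lemma dp_bform:
  assumes "regular_infinite_cardinal TYPE('k::wellorder)"
  shows "dp (bform i \<phi> :: 'k kexp) = osucc (dp \<phi>)"
  unfolding bform_def using dp_disj2[OF assms] by simp

lemma wf_bform:
  assumes "regular_infinite_cardinal TYPE('k::wellorder)" "kexp_wf \<phi>"
  shows "kexp_wf (bform i \<phi> :: 'k kexp)"
  unfolding bform_def using assms by (intro wf_disj2 kexp_wf.intros) auto

lemma bel_lemma:
  assumes "star_type_space T" "w \<in> W" "A \<subseteq> W"
    "T i w {u\<in>W. (u\<in>A) = (w\<in>A)} = half_or_one c"
  shows "(1 \<le> T i w A \<or> 1 \<le> T i w (W - A)) \<longleftrightarrow> c"
proof -
  have fa: "fa_prob W (T i w)" using assms(1,2) unfolding star_type_space_def by blast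
  have "T i w (A \<union> (W - A)) = T i w A + T i w (W - A)"
    using fa assms(3) unfolding fa_prob_def by blast
  moreover have "A \<union> (W - A) = W" using assms(3) by blast
  ultimately have sum: "T i w A + T i w (W - A) = 1" using fa unfolding fa_prob_def by simp
  show ?thesis
  proof (cases "w \<in> A")
    case True
    then have "{u\<in>W. (u\<in>A) = (w\<in>A)} = A" using assms(3) by auto
    then show ?thesis using assms(4) sum by (auto simp: half_or_one_def)
  next
    case False
    then have "{u\<in>W. (u\<in>A) = (w\<in>A)} = W - A" by auto
    then show ?thesis using assms(4) sum by (auto simp: half_or_one_def)
  qed
qed

lemma sem_bform:
  assumes "regular_infinite_cardinal TYPE('k::wellorder)" "star_type_space T"
    "\<And>w. w \<in> W \<Longrightarrow> T i w {u\<in>W. (u\<in>sem T \<phi>) = (w\<in>sem T \<phi>)} = half_or_one (Q w)"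
  shows "sem T (bform i \<phi> :: 'k kexp) = {w\<in>W. Q w}"
proof -
  have "sem T (bform i \<phi>) = {w\<in>W. 1 \<le> T i w (sem T \<phi>) \<or> 1 \<le> T i w (W - sem T \<phi>)}"
    unfolding bform_def sem_disj2[OF assms(1)] by auto
  also have "\<dots> = {w\<in>W. Q w}"
    using bel_lemma[OF assms(2) _ sem_sub assms(3)] by blast
  finally show ?thesis .
qed


lemma W_record: "u \<in> W \<Longrightarrow> is_record (X i u)"
  by (cases i) (auto simp: W_def)

definition good :: "(agent \<Rightarrow> 'k::wellorder world \<Rightarrow> 'k world set \<Rightarrow> real) \<Rightarrow> 'k \<Rightarrow> agent \<Rightarrow> 'k kexp \<Rightarrow> bool" where
  "good T b i \<phi> \<longleftrightarrow> kexp_wf \<phi> \<and> dp \<phi> = osucc b \<and> sem T \<phi> = {u\<in>W. X i u b}"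

definition psi :: "(agent \<Rightarrow> 'k::wellorder \<Rightarrow> 'k kexp) \<Rightarrow> agent \<Rightarrow> 'k \<Rightarrow> 'k \<Rightarrow> 'k kexp" where
  "psi F i l d = Conj {b. d \<le> b \<and> b < l} (\<lambda>b. if b = d then F i b else Neg (F i b))"

definition oddf :: "(agent \<Rightarrow> 'k::wellorder \<Rightarrow> 'k kexp) \<Rightarrow> agent \<Rightarrow> 'k \<Rightarrow> 'k kexp" where
  "oddf F i l = Neg (Conj {d. d < l \<and> \<not> ord_even (osucc d)} (\<lambda>d. Neg (psi F i l d)))"

lemma psi_props:
  assumes reg: "regular_infinite_cardinal TYPE('k::wellorder)" and lim: "is_limit (l::'k)"
    and F: "\<forall>c<l. \<forall>i. good T c i (F i c)" and dl: "d < l"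
  shows "kexp_wf (psi F i l d) \<and> dp (psi F i l d) = l
    \<and> sem T (psi F i l d) = {u\<in>W. X i u d \<and> (\<forall>b. d < b \<and> b < l \<longrightarrow> \<not> X i u b)}"
proof (intro conjI)
  have Fb: "\<And>b. b < l \<Longrightarrow> kexp_wf (F i b) \<and> dp (F i b) = osucc b \<and> sem T (F i b) = {u\<in>W. X i u b}"
    using F unfolding good_def by blast
  show "kexp_wf (psi F i l d)" unfolding psi_def
  proof (intro kexp_wf.intros)
    show "{b. d \<le> b \<and> b < l} \<noteq> {}" using dl by auto
    show "{b. d \<le> b \<and> b < l} \<prec> (UNIV::'k set)" by (rule small_below[OF reg]) auto
    show "\<forall>g\<in>{b. d \<le> b \<and> b < l}. kexp_wf (if g = d then F i g else Neg (F i g))"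
      using Fb by (auto intro: kexp_wf.intros)
  qed
  have "(\<lambda>x. \<forall>g\<in>{b. d \<le> b \<and> b < l}. dp (if g = d then F i g else Neg (F i g)) \<le> x)
      = (\<lambda>x. \<forall>b. d \<le> b \<and> b < l \<longrightarrow> osucc b \<le> x)"
    using Fb by (intro ext) auto
  then show "dp (psi F i l d) = l" unfolding psi_def using lub_limit[OF reg lim dl] by simp
  show "sem T (psi F i l d) = {u\<in>W. X i u d \<and> (\<forall>b. d < b \<and> b < l \<longrightarrow> \<not> X i u b)}"
  proof -
    have "sem T (psi F i l d) = W \<inter> (\<Inter>g\<in>{b. d \<le> b \<and> b < l}. sem T (if g = d then F i g else Neg (F i g)))"
      unfolding psi_def by simp
    also have "\<dots> = {u\<in>W. X i u d \<and> (\<forall>b. d < b \<and> b < l \<longrightarrow> \<not> X i u b)}"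
    proof (intro equalityI subsetI)
      fix u assume u: "u \<in> W \<inter> (\<Inter>g\<in>{b. d \<le> b \<and> b < l}. sem T (if g = d then F i g else Neg (F i g)))"
      have uW: "u \<in> W" using u by blast
      from u have "u \<in> sem T (F i d)" using dl by auto
      then have ud: "X i u d" using Fb[OF dl] by auto
      have "\<forall>b. d < b \<and> b < l \<longrightarrow> \<not> X i u b"
      proof (intro allI impI notI)
        fix b assume b: "d < b \<and> b < l" "X i u b"
        have "b \<in> {b. d \<le> b \<and> b < l}" using b by auto
        then have "u \<in> sem T (if b = d then F i b else Neg (F i b))" using u by blast
        moreover have "b \<noteq> d" using b by auto
        ultimately have "u \<in> sem T (Neg (F i b))" by (simp only: if_False)
        then show False using Fb[of b] b by auto
      qed
      then show "u \<in> {u\<in>W. X i u d \<and> (\<forall>b. d < b \<and> b < l \<longrightarrow> \<not> X i u b)}" using uW ud by blast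
    next
      fix u assume u: "u \<in> {u\<in>W. X i u d \<and> (\<forall>b. d < b \<and> b < l \<longrightarrow> \<not> X i u b)}"
      have "\<And>g. g \<in> {b. d \<le> b \<and> b < l} \<Longrightarrow> u \<in> sem T (if g = d then F i g else Neg (F i g))"
      proof -
        fix g assume g: "g \<in> {b. d \<le> b \<and> b < l}"
        show "u \<in> sem T (if g = d then F i g else Neg (F i g))"
        proof (cases "g = d")
          case True then show ?thesis using u Fb[OF dl] by auto
        next
          case False then have "d < g" using g by auto
          then show ?thesis using u Fb[of g] g False by auto
        qed
      qed
      then show "u \<in> W \<inter> (\<Inter>g\<in>{b. d \<le> b \<and> b < l}. sem T (if g = d then F i g else Neg (F i g)))"
        using u by blast
    qed
    finally show ?thesis .
  qed
qed

lemma oddf_props: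
  assumes reg: "regular_infinite_cardinal TYPE('k::wellorder)" and lim: "is_limit (l::'k)"
    and F: "\<forall>c<l. \<forall>i. good T c i (F i c)"
  shows "kexp_wf (oddf F i l) \<and> dp (oddf F i l) = l
    \<and> sem T (oddf F i l) = {u\<in>W. \<not> lpar_even l (X i u)}"
proof (intro conjI)
  have P: "\<And>d. d < l \<Longrightarrow> kexp_wf (psi F i l d) \<and> dp (psi F i l d) = l
    \<and> sem T (psi F i l d) = {u\<in>W. X i u d \<and> (\<forall>b. d < b \<and> b < l \<longrightarrow> \<not> X i u b)}"
    using psi_props[OF reg lim F] by blast
  have "ord0 < l" using lim ord0_le unfolding is_limit_def by (meson le_less_trans)
  then have D: "ord0 \<in> {d. d < l \<and> \<not> ord_even (osucc d)}" using osucc_ord0_odd[OF reg] by simp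
  show "kexp_wf (oddf F i l)" unfolding oddf_def
  proof (intro kexp_wf.intros)
    show "{d. d < l \<and> \<not> ord_even (osucc d)} \<noteq> {}" using D by blast
    show "{d. d < l \<and> \<not> ord_even (osucc d)} \<prec> (UNIV::'k set)" by (rule small_below[OF reg]) auto
    show "\<forall>g\<in>{d. d < l \<and> \<not> ord_even (osucc d)}. kexp_wf (Neg (psi F i l g))"
      using P by (auto intro: kexp_wf.intros)
  qed
  have "(\<lambda>x. \<forall>g\<in>{d. d < l \<and> \<not> ord_even (osucc d)}. dp (Neg (psi F i l g)) \<le> x) = (\<lambda>x. l \<le> x)"
    using P D by (intro ext) auto
  then show "dp (oddf F i l) = l" unfolding oddf_def by (simp add: Least_equality)
  have "sem T (oddf F i l) = {u\<in>W. \<exists>d. d < l \<and> \<not> ord_even (osucc d) \<and> u \<in> sem T (psi F i l d)}"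
    unfolding oddf_def by auto
  also have "\<dots> = {u\<in>W. \<not> lpar_even l (X i u)}"
  proof (intro equalityI subsetI)
    fix u assume "u \<in> {u\<in>W. \<exists>d. d < l \<and> \<not> ord_even (osucc d) \<and> u \<in> sem T (psi F i l d)}"
    then obtain d where "u \<in> W" "d < l" "\<not> ord_even (osucc d)" "u \<in> sem T (psi F i l d)" by blast
    then show "u \<in> {u\<in>W. \<not> lpar_even l (X i u)}"
      using P[of d] odd_iff[OF reg W_record lim, of u i] by auto
  next
    fix u assume "u \<in> {u\<in>W. \<not> lpar_even l (X i u)}"
    then have u: "u \<in> W" "\<not> lpar_even l (X i u)" by auto
    then obtain d where "d < l" "\<not> ord_even (osucc d)" "X i u d" "\<forall>b. d < b \<and> b < l \<longrightarrow> \<not> X i u b"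
      using odd_iff[OF reg W_record lim, of u i] by blast
    then show "u \<in> {u\<in>W. \<exists>d. d < l \<and> \<not> ord_even (osucc d) \<and> u \<in> sem T (psi F i l d)}"
      using P[of d] u(1) by auto
  qed
  finally show "sem T (oddf F i l) = {u\<in>W. \<not> lpar_even l (X i u)}" .
qed


lemma star_coin: "star_type_space T \<Longrightarrow> w \<in> W \<Longrightarrow>
    T i w {u\<in>W. fst u = fst w} = half_or_one (X i w ord0)"
  unfolding star_type_space_def by blast

lemma star_succ: "star_type_space T \<Longrightarrow> w \<in> W \<Longrightarrow>
    T i w {u\<in>W. X (other i) u b = X (other i) w b} = half_or_one (X i w (osucc b))"
  unfolding star_type_space_def by blast

lemma star_lim: "star_type_space T \<Longrightarrow> w \<in> W \<Longrightarrow> is_limit l \<Longrightarrow>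
    T i w {u\<in>W. lpar_even l (X (other i) u) = lpar_even l (X (other i) w)} = half_or_one (X i w l)"
  unfolding star_type_space_def by blast

lemma part2:
  assumes reg: "regular_infinite_cardinal TYPE('k::wellorder)" and st: "star_type_space T"
  shows "\<forall>i. \<exists>\<phi>. good T (b::'k) i \<phi>"
proof (induction b rule: less_induct)
  case (less b)
  show ?case
  proof
    fix i
    show "\<exists>\<phi>. good T b i \<phi>"
    proof (cases "b = ord0")
      case True
      let ?\<phi> = "bform i (Prim {Hd}) :: 'k kexp"
      have "sem T ?\<phi> = {w\<in>W. X i w b}"
      proof (rule sem_bform[OF reg st])
        fix w :: "'k world" assume w: "w \<in> W"
        have "{u\<in>W. (u\<in>sem T (Prim {Hd})) = (w\<in>sem T (Prim {Hd}))} = {u\<in>W. fst u = fst w}"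
        proof -
          have "\<And>u. ((fst u = Hd) = (fst w = Hd)) = (fst u = fst w)"
            by (case_tac "fst u"; cases "fst w") auto
          then show ?thesis using w by auto
        qed
        then show "T i w {u\<in>W. (u\<in>sem T (Prim {Hd})) = (w\<in>sem T (Prim {Hd}))} = half_or_one (X i w b)"
          using star_coin[OF st w] True by simp
      qed
      moreover have "kexp_wf ?\<phi>" by (intro wf_bform[OF reg] kexp_wf.intros)
      moreover have "dp ?\<phi> = osucc b" using dp_bform[OF reg] True by simp
      ultimately show ?thesis unfolding good_def by blast
    next
      case False
      then have b0: "ord0 < b" using ord0_le[of b] by simp
      show ?thesis
      proof (cases "is_limit b")
        case lim: True
        define F where "F = (\<lambda>j c. SOME \<phi>. good T c j \<phi>)"
        have F: "\<forall>c<b. \<forall>j. good T c j (F j c)"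
        proof (intro allI impI)
          fix c j assume "c < b"
          then have "\<exists>\<phi>. good T c j \<phi>" using less.IH by blast
          then show "good T c j (F j c)" unfolding F_def by (rule someI_ex)
        qed
        note O = oddf_props[OF reg lim F, of "other i"]
        let ?e = "Neg (oddf F (other i) b)"
        have se: "sem T ?e = {u\<in>W. lpar_even b (X (other i) u)}" using O by auto
        let ?\<phi> = "bform i ?e"
        have "sem T ?\<phi> = {w\<in>W. X i w b}"
        proof (rule sem_bform[OF reg st])
          fix w :: "'k world" assume w: "w \<in> W"
          have "{u\<in>W. (u\<in>sem T ?e) = (w\<in>sem T ?e)} = {u\<in>W. lpar_even b (X (other i) u) = lpar_even b (X (other i) w)}"
            unfolding se using w by auto
          then show "T i w {u\<in>W. (u\<in>sem T ?e) = (w\<in>sem T ?e)} = half_or_one (X i w b)"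
            using star_lim[OF st w lim] by simp
        qed
        moreover have "kexp_wf ?\<phi>" using O by (intro wf_bform[OF reg] kexp_wf.intros) auto
        moreover have "dp ?\<phi> = osucc b" using dp_bform[OF reg] O by simp
        ultimately show ?thesis unfolding good_def by blast
      next
        case nlim: False
        then have "is_successor b" using b0 unfolding is_limit_def by blast
        then obtain c where c: "c < b" "\<not> (\<exists>z. c < z \<and> z < b)" unfolding is_successor_def by blast
        have bc: "osucc c = b"
        proof -
          have "osucc c \<le> b" using osucc_le c(1) .
          moreover have "\<not> osucc c < b" using c(2) osucc_gt[OF reg, of c] by blast
          ultimately show ?thesis by simp
        qed
        obtain \<psi> where \<psi>: "good T c (other i) \<psi>" using less.IH[OF c(1)] by blast
        let ?\<phi> = "bform i \<psi>"
        have "sem T ?\<phi> = {w\<in>W. X i w b}"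
        proof (rule sem_bform[OF reg st])
          fix w :: "'k world" assume w: "w \<in> W"
          have "{u\<in>W. (u\<in>sem T \<psi>) = (w\<in>sem T \<psi>)} = {u\<in>W. X (other i) u c = X (other i) w c}"
            using \<psi> w unfolding good_def by auto
          then show "T i w {u\<in>W. (u\<in>sem T \<psi>) = (w\<in>sem T \<psi>)} = half_or_one (X i w b)"
            using star_succ[OF st w, of i c] bc by simp
        qed
        moreover have "kexp_wf ?\<phi>" using \<psi> unfolding good_def by (intro wf_bform[OF reg]) auto
        moreover have "dp ?\<phi> = osucc b" using dp_bform[OF reg] \<psi> bc unfolding good_def by simp
        ultimately show ?thesis unfolding good_def by blast
      qed
    qed
  qed
qed

theorem lemma9:
  fixes T :: "agent \<Rightarrow> 'k::wellorder world \<Rightarrow> 'k world set \<Rightarrow> real"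
  assumes "regular_infinite_cardinal TYPE('k)"
    and "star_type_space T"
  shows "(sem T (Prim {Hd}) = {u\<in>W. fst u = Hd} \<and> sem T (Prim {Tl}) = {u\<in>W. fst u = Tl}
         \<and> dp (Prim {Hd} :: 'k kexp) = ord0 \<and> dp (Prim {Tl} :: 'k kexp) = ord0)
    \<and> (\<forall>i (b::'k). \<exists>\<phi>1 \<phi>0. kexp_wf \<phi>1 \<and> kexp_wf \<phi>0
           \<and> dp \<phi>1 = osucc b \<and> dp \<phi>0 = osucc b
           \<and> sem T \<phi>1 = {u\<in>W. X i u b} \<and> sem T \<phi>0 = {u\<in>W. \<not> X i u b})
    \<and> (\<forall>i (l::'k). is_limit l \<longrightarrow> (\<exists>\<phi>e \<phi>o. kexp_wf \<phi>e \<and> kexp_wf \<phi>o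
           \<and> dp \<phi>e = l \<and> dp \<phi>o = l
           \<and> sem T \<phi>e = {u\<in>W. lpar_even l (X i u)}
           \<and> sem T \<phi>o = {u\<in>W. \<not> lpar_even l (X i u)}))"
proof (intro conjI allI impI)
  note P2 = part2[OF assms]
  show "sem T (Prim {Hd}) = {u\<in>W. fst u = Hd}" by simp
  show "sem T (Prim {Tl}) = {u\<in>W. fst u = Tl}" by simp
  show "dp (Prim {Hd} :: 'k kexp) = ord0" by simp
  show "dp (Prim {Tl} :: 'k kexp) = ord0" by simp
  fix i
  {
    fix b :: 'k
    obtain \<phi> where \<phi>: "good T b i \<phi>" using P2 by blast
    then show "\<exists>\<phi>1 \<phi>0. kexp_wf \<phi>1 \<and> kexp_wf \<phi>0
           \<and> dp \<phi>1 = osucc b \<and> dp \<phi>0 = osucc b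
           \<and> sem T \<phi>1 = {u\<in>W. X i u b} \<and> sem T \<phi>0 = {u\<in>W. \<not> X i u b}"
    proof -
      have a: "kexp_wf \<phi>" "dp \<phi> = osucc b" "sem T \<phi> = {u\<in>W. X i u b}" using \<phi> unfolding good_def by auto
      then have b: "kexp_wf (Neg \<phi>)" "dp (Neg \<phi>) = osucc b" "sem T (Neg \<phi>) = {u\<in>W. \<not> X i u b}"
        by (auto intro: kexp_wf.intros(2))
      show ?thesis using a b by blast
    qed
  }
  {
    fix l :: 'k assume lim: "is_limit l"
    define F where "F = (\<lambda>j c. SOME \<phi>. good T c j \<phi>)"
    have F: "\<forall>c<l. \<forall>j. good T c j (F j c)"
    proof (intro allI impI)
      fix c j assume "c < l"
      have "\<exists>\<phi>. good T c j \<phi>" using P2 by blast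
      then show "good T c j (F j c)" unfolding F_def by (rule someI_ex)
    qed
    note O = oddf_props[OF assms(1) lim F, of i]
    show "\<exists>\<phi>e \<phi>o. kexp_wf \<phi>e \<and> kexp_wf \<phi>o
           \<and> dp \<phi>e = l \<and> dp \<phi>o = l
           \<and> sem T \<phi>e = {u\<in>W. lpar_even l (X i u)}
           \<and> sem T \<phi>o = {u\<in>W. \<not> lpar_even l (X i u)}"
    proof -
      have a: "kexp_wf (oddf F i l)" "dp (oddf F i l) = l" "sem T (oddf F i l) = {u\<in>W. \<not> lpar_even l (X i u)}"
        using O by auto
      then have b: "kexp_wf (Neg (oddf F i l))" "dp (Neg (oddf F i l)) = l"
        "sem T (Neg (oddf F i l)) = {u\<in>W. lpar_even l (X i u)}"
        by (auto intro: kexp_wf.intros(2))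
      show ?thesis using a b by blast
    qed
  }
qed

end
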